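(* Let $(C,\mathfrak p,\mathfrak d)$ be a regular $q$-magma coalgebra. If $0\le i,j,k\le n-1$ and $k>i$, then $\mathfrak p_{ij}^k=\mathfrak d_{ij}^k=0$.
   Context: $K$ is an algebraically closed field of characteristic $0$ and $n\ge2$. $C$ is the coalgebra dual to $K[y]/\langle y^n\rangle$: basis $x_0,\dots,x_{n-1}$, $\Delta(x_i)=\sum_{j+k=i}x_j\otimes x_k$, $\epsilon(x_i)=\delta_{i0}$; $C\otimes C$ has the tensor product coalgebra structure; Sweedler notation $\Delta(b)=b_{(1)}\otimes b_{(2)}$. For linear maps $\mathfrak p,\mathfrak d\colon C\otimes C\to C$ write $a\cdot b=\mathfrak p(a\otimes b)$, $a:b=\mathfrak d(a\otimes b)$, $\mathfrak p(x_i\otimes x_j)=\sum_{k=0}^{n-1}\mathfrak p_{ij}^kx_k$, $\mathfrak d(x_i\otimes x_j)=\sum_{k=0}^{n-1}\mathfrak d_{ij}^kx_k$. A triple $(C,\mathfrak p,\mathfrak d)$ with $\mathfrak p,\mathfrak d$ coalgebra morphisms is a regular $q$-magma coalgebra if there are coalgebra morphisms $a\otimes b\mapsto a^b$, $a\otimes b\mapsto a_b$ from $C\otimes C$ to $C$ with $a^{b_{(1)}}\cdot b_{(2)}=(a\cdot b_{(1)})^{b_{(2)}}=\epsilon(b)a$ and $(a:b_{(2)})_{b_{(1)}}=a_{b_{(2)}}:b_{(1)}=\epsilon(b)a$ for all $a,b\in C$. *)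

theory Defs
  imports "HOL-Computational_Algebra.Polynomial"
begin

(* The coalgebra C = (K[y]/<y^n>)^* has basis x_0,...,x_{n-1} with
   Delta(x_i) = sum_{j+k=i} x_j (x) x_k and eps(x_i) = delta_{i0}.
   A linear map f : C (x) C -> C is given by its structure constants
   F i j k, meaning f(x_i (x) x_j) = sum_{k<n} F i j k x_k
   (only indices < n are relevant). *)

definition alg_closed_field :: "'k::field itself \<Rightarrow> bool" where
  "alg_closed_field _ \<longleftrightarrow> (\<forall>p :: 'k poly. degree p > 0 \<longrightarrow> (\<exists>x. poly p x = 0))"

(* f is a coalgebra morphism C (x) C -> C (C (x) C with the tensor product
   coalgebra structure), written out on basis elements:
   eps(f(x_i (x) x_j)) = eps(x_i) eps(x_j), and
   Delta(f(x_i (x) x_j)) = sum_{i1+i2=i, j1+j2=j} f(x_i1 (x) x_j1) (x) f(x_i2 (x) x_j2),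
   compared coefficientwise at x_k (x) x_l. *)
definition coalg_morph :: "nat \<Rightarrow> (nat \<Rightarrow> nat \<Rightarrow> nat \<Rightarrow> 'k::field) \<Rightarrow> bool" where
  "coalg_morph n F \<longleftrightarrow>
     (\<forall>i<n. \<forall>j<n. F i j 0 = (if i = 0 \<and> j = 0 then 1 else 0)) \<and>
     (\<forall>i<n. \<forall>j<n. \<forall>k<n. \<forall>l<n.
        (if k + l < n then F i j (k + l) else 0)
          = (\<Sum>i1\<le>i. \<Sum>j1\<le>j. F i1 j1 k * F (i - i1) (j - j1) l))"

(* Regular q-magma coalgebra (C,p,d): p, d coalgebra morphisms and there exist
   coalgebra morphisms U (a (x) b |-> a^b) and V (a (x) b |-> a_b) with
   a^{b(1)} . b(2) = (a . b(1))^{b(2)} = eps(b) a  and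
   (a : b(2))_{b(1)} = a_{b(2)} : b(1) = eps(b) a,
   written out for a = x_i, b = x_j, coefficient at x_k (by linearity this
   is equivalent to the identities for all a, b in C). *)
definition regular_qmagma ::
  "nat \<Rightarrow> (nat \<Rightarrow> nat \<Rightarrow> nat \<Rightarrow> 'k::field) \<Rightarrow> (nat \<Rightarrow> nat \<Rightarrow> nat \<Rightarrow> 'k) \<Rightarrow> bool" where
  "regular_qmagma n P D \<longleftrightarrow> coalg_morph n P \<and> coalg_morph n D \<and>
     (\<exists>U V. coalg_morph n U \<and> coalg_morph n V \<and>
       (\<forall>i<n. \<forall>j<n. \<forall>k<n.
          (\<Sum>j1\<le>j. \<Sum>m<n. U i j1 m * P m (j - j1) k)
             = (if j = 0 \<and> i = k then 1 else 0) \<and>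
          (\<Sum>j1\<le>j. \<Sum>m<n. P i j1 m * U m (j - j1) k)
             = (if j = 0 \<and> i = k then 1 else 0) \<and>
          (\<Sum>j1\<le>j. \<Sum>m<n. D i (j - j1) m * V m j1 k)
             = (if j = 0 \<and> i = k then 1 else 0) \<and>
          (\<Sum>j1\<le>j. \<Sum>m<n. V i (j - j1) m * D m j1 k)
             = (if j = 0 \<and> i = k then 1 else 0)))"

end

theory Submission
  imports Defs
begin

lemma cmM:
  assumes "coalg_morph n F" "i<n" "j<n" "k<n" "l<n"
  shows "(if k + l < n then F i j (k + l) else 0)
          = (\<Sum>i1\<le>i. \<Sum>j1\<le>j. F i1 j1 k * F (i - i1) (j - j1) l)"
  using assms unfolding coalg_morph_def by blast

lemma cmE:
  assumes "coalg_morph n F" "i<n" "j<n"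
  shows "F i j 0 = (if i = 0 \<and> j = 0 then 1 else 0)"
  using assms unfolding coalg_morph_def by blast

lemma F00pow:
  assumes "coalg_morph n F" "k<n"
  shows "F 0 0 k = F 0 0 1 ^ k"
  using assms(2)
proof (induction k)
  case 0
  then show ?case using cmE[OF assms(1)] by simp
next
  case (Suc k)
  have "n > 1" using Suc by simp
  have "(if 1 + k < n then F 0 0 (1 + k) else 0) = F 0 0 1 * F 0 0 k"
    using cmM[OF assms(1), of 0 0 1 k] Suc by simp
  then show ?case using Suc by simp
qed

lemma F00zero:
  assumes "coalg_morph n F" "n \<ge> 2" "1 \<le> k" "k<n"
  shows "F 0 0 k = (0::'k::field)"
proof -
  have "(if 1 + (n-1) < n then F 0 0 (1 + (n-1)) else 0) = F 0 0 1 * F 0 0 (n-1)"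
    using cmM[OF assms(1), of 0 0 1 "n-1"] assms by simp
  hence "0 = F 0 0 1 * F 0 0 1 ^ (n-1)" using F00pow[OF assms(1), of "n-1"] assms by simp
  hence "F 0 0 1 ^ n = 0" using assms(2)
    by (metis Suc_diff_1 not_numeral_le_zero not_gr0 power_Suc)
  hence "F 0 0 1 = 0" by simp
  then show ?thesis using F00pow[OF assms(1) assms(4)] assms(3) by simp
qed

lemma F10zero:
  assumes "coalg_morph n F" "n \<ge> 2" "2 \<le> m" "m<n"
  shows "F 1 0 m = (0::'k::field)"
proof -
  have "(if 1 + (m-1) < n then F 1 0 (1 + (m-1)) else 0)
     = (\<Sum>i1\<le>1. \<Sum>j1\<le>0. F i1 j1 1 * F (1 - i1) (0 - j1) (m-1))"
    using cmM[OF assms(1), of 1 0 1 "m-1"] assms by simp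
  moreover have "F 0 0 1 = 0" "F 0 0 (m-1) = 0"
    using F00zero[OF assms(1,2)] assms by auto
  ultimately show ?thesis using assms by simp
qed

lemma lin_nonzero:
  assumes "coalg_morph n F" "n \<ge> 2"
    and "(\<Sum>m<n. F 1 0 m * G m 0 1) = (1::'k::field)"
  shows "F 1 0 1 \<noteq> 0"
proof -
  have "(\<Sum>m<n. F 1 0 m * G m 0 1) = (\<Sum>m<n. if m = 1 then F 1 0 1 * G 1 0 1 else 0)"
  proof (rule sum.cong)
    fix m assume m: "m \<in> {..<n}"
    show "F 1 0 m * G m 0 1 = (if m = 1 then F 1 0 1 * G 1 0 1 else 0)"
    proof (cases "m = 0")
      case True then show ?thesis using cmE[OF assms(1), of 1 0] assms by simp
    next
      case False
      then show ?thesis using F10zero[OF assms(1,2), of m] m by (cases "m = 1") auto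
    qed
  qed simp
  also have "\<dots> = F 1 0 1 * G 1 0 1" using assms(2) by simp
  finally show ?thesis using assms(3) by auto
qed



lemma weightV1:
  fixes F :: "nat \<Rightarrow> nat \<Rightarrow> nat \<Rightarrow> 'k::field" and r i j :: nat
  assumes rmin: "\<And>j. j < r \<Longrightarrow> F 0 j 1 = (0::'k::field)"
    and "r*i + j < r*1"
  shows "F i j 1 = 0"
proof -
  have "i = 0"
  proof (rule ccontr)
    assume "i \<noteq> 0"
    hence "r \<le> r*i" using mult_le_mono2[of 1 i r] by simp
    thus False using assms(2) by linarith
  qed
  moreover have "j < r" using assms(2) calculation by simp
  ultimately show ?thesis using rmin by simp
qed

lemma weightV:
  assumes cm: "coalg_morph n F"
    and rmin: "\<And>j. j < r \<Longrightarrow> F 0 j 1 = (0::'k::field)"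
    and "1 \<le> m" "m < n"
  shows "\<And>i j. i < n \<Longrightarrow> j < n \<Longrightarrow> r*i + j < r*m \<Longrightarrow> F i j m = 0"
  using assms(3,4)
proof (induction m rule: dec_induct)
  case base
  fix i j assume "i < n" "j < n" "r*i + j < r*1"
  then show "F i j 1 = 0" using weightV1[where F=F and r=r, OF rmin] by blast
next
  case (step m)
  fix i j assume ij: "i < n" "j < n" "r*i + j < r*Suc m"
  have "(if 1 + m < n then F i j (1 + m) else 0)
     = (\<Sum>i1\<le>i. \<Sum>j1\<le>j. F i1 j1 1 * F (i - i1) (j - j1) m)"
    using cmM[OF cm, of i j 1 m] ij step by simp
  also have "\<dots> = 0"
  proof (intro sum.neutral ballI)
    fix i1 j1 assume "i1 \<in> {..i}" "j1 \<in> {..j}"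
    hence le: "i1 \<le> i" "j1 \<le> j" by auto
    show "F i1 j1 1 * F (i - i1) (j - j1) m = 0"
    proof (cases "r*i1 + j1 < r*1")
      case True
      then show ?thesis using weightV1[where F=F and r=r, OF rmin True] by simp
    next
      case False
      have e: "r*(i-i1) = r*i - r*i1" by (simp add: diff_mult_distrib2)
      have "r*i1 \<le> r*i" using le by simp
      moreover have "r * Suc m = r + r*m" by simp
      moreover have "\<not> r*i1 + j1 < r" using False by simp
      ultimately have "r*(i - i1) + (j - j1) < r*m" using ij(3) le e by linarith
      then show ?thesis using step.IH[of "i-i1" "j-j1"] ij step.prems le by simp
    qed
  qed
  finally show "F i j (Suc m) = 0" using step by simp
qed


lemma delta2:
  "(\<Sum>i1\<le>(i::nat). \<Sum>j1\<le>(j::nat). (if i1 = p then (if j1 = q then (X::'a::comm_monoid_add) else 0) else 0))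
    = (if p \<le> i \<and> q \<le> j then X else 0)"
proof -
  have "\<And>i1. (\<Sum>j1\<le>j. (if i1 = p then (if j1 = q then X else 0) else 0))
      = (if i1 = p then (if q \<le> j then X else 0) else 0)"
    by (simp add: sum.delta')
  hence "(\<Sum>i1\<le>i. \<Sum>j1\<le>j. (if i1 = p then (if j1 = q then X else 0) else 0))
     = (\<Sum>i1\<le>i. (if i1 = p then (if q \<le> j then X else 0) else 0))" by simp
  also have "\<dots> = (if p \<le> i \<and> q \<le> j then X else 0)"
    by (simp add: sum.delta')
  finally show ?thesis .
qed

lemma twoterm:
  fixes F :: "nat \<Rightarrow> nat \<Rightarrow> nat \<Rightarrow> 'k::field"
  assumes cm: "coalg_morph n F"
    and rmin: "\<And>j. j < r \<Longrightarrow> F 0 j 1 = 0"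
    and r1: "1 \<le> r"
    and m: "1 \<le> m" "m < n" and ij: "i < n" "j < n" "r*i + j = r*(Suc m)"
  shows "(\<Sum>i1\<le>i. \<Sum>j1\<le>j. F i1 j1 1 * F (i - i1) (j - j1) m)
      = (if r \<le> j then F 0 r 1 * F i (j - r) m else 0)
        + (if 1 \<le> i then F 1 0 1 * F (i - 1) j m else 0)"
proof -
  let ?g = "\<lambda>i1 j1. (if i1 = 0 then (if j1 = r then F 0 r 1 * F i (j - r) m else 0) else 0)
     + (if i1 = 1 then (if j1 = 0 then F 1 0 1 * F (i - 1) j m else 0) else 0)"
  have "(\<Sum>i1\<le>i. \<Sum>j1\<le>j. F i1 j1 1 * F (i - i1) (j - j1) m)
      = (\<Sum>i1\<le>i. \<Sum>j1\<le>j. ?g i1 j1)"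
  proof (intro sum.cong refl)
    fix i1 j1 assume "i1 \<in> {..i}" "j1 \<in> {..j}"
    hence le: "i1 \<le> i" "j1 \<le> j" by auto
    show "F i1 j1 1 * F (i - i1) (j - j1) m = ?g i1 j1"
    proof (cases "(i1 = 0 \<and> j1 = r) \<or> (i1 = 1 \<and> j1 = 0)")
      case True
      then show ?thesis using r1 by auto
    next
      case False
      hence g0: "?g i1 j1 = 0" by auto
      show ?thesis
      proof (cases "r*i1 + j1 < r*1")
        case True
        then show ?thesis using weightV1[where F=F and r=r, OF rmin True] g0 by simp
      next
        case nlt: False
        have "r*i1 + j1 \<noteq> r"
        proof
          assume eq: "r*i1 + j1 = r"
          show False
          proof (cases "i1 \<ge> 2")
            case True
            hence "r*2 \<le> r*i1" using mult_le_mono2 by blast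
            then show False using eq r1 by linarith
          next
            case False
            hence "i1 = 0 \<or> i1 = 1" by auto
            then show False using eq \<open>\<not> ((i1 = 0 \<and> j1 = r) \<or> (i1 = 1 \<and> j1 = 0))\<close> by auto
          qed
        qed
        hence gt: "r*i1 + j1 > r" using nlt by simp
        have e: "r*(i-i1) = r*i - r*i1" by (simp add: diff_mult_distrib2)
        have "r*i1 \<le> r*i" using le by simp
        moreover have "r * Suc m = r + r*m" by simp
        ultimately have "r*(i - i1) + (j - j1) < r*m" using ij(3) le e gt by linarith
        then have "F (i - i1) (j - j1) m = 0"
          using weightV[where F=F and r=r, OF cm rmin m, of "i-i1" "j-j1"] ij by simp
        then show ?thesis using g0 by simp
      qed
    qed
  qed
  also have "\<dots> = (if r \<le> j then F 0 r 1 * F i (j - r) m else 0)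
        + (if 1 \<le> i then F 1 0 1 * F (i - 1) j m else 0)"
    by (simp only: sum.distrib delta2) auto
  finally show ?thesis .
qed


lemma valA:
  fixes F :: "nat \<Rightarrow> nat \<Rightarrow> nat \<Rightarrow> 'k::field"
  assumes cm: "coalg_morph n F"
    and rmin: "\<And>j. j < r \<Longrightarrow> F 0 j 1 = 0"
    and r1: "1 \<le> r"
    and m: "1 \<le> m" "m < n"
  shows "F m 0 m = F 1 0 1 ^ m"
  using m
proof (induction m rule: dec_induct)
  case base
  then show ?case by simp
next
  case (step m)
  have "(if 1 + m < n then F (Suc m) 0 (1 + m) else 0)
     = (\<Sum>i1\<le>Suc m. \<Sum>j1\<le>0. F i1 j1 1 * F (Suc m - i1) (0 - j1) m)"
    using cmM[OF cm, of "Suc m" 0 1 m] step by simp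
  also have "\<dots> = (if r \<le> 0 then F 0 r 1 * F (Suc m) (0 - r) m else 0)
        + (if 1 \<le> Suc m then F 1 0 1 * F (Suc m - 1) 0 m else 0)"
    by (rule twoterm[OF cm rmin r1]) (use step in auto)
  finally show ?case using step r1 by simp
qed

lemma valB:
  fixes F :: "nat \<Rightarrow> nat \<Rightarrow> nat \<Rightarrow> 'k::field"
  assumes cm: "coalg_morph n F"
    and rmin: "\<And>j. j < r \<Longrightarrow> F 0 j 1 = 0"
    and r1: "1 \<le> r" and rn: "r < n"
    and m: "1 \<le> m" "m < n"
  shows "F (m - 1) r m = of_nat m * F 1 0 1 ^ (m - 1) * F 0 r 1"
  using m
proof (induction m rule: dec_induct)
  case base
  then show ?case by simp
next
  case (step m)
  have "(if 1 + m < n then F m r (1 + m) else 0)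
     = (\<Sum>i1\<le>m. \<Sum>j1\<le>r. F i1 j1 1 * F (m - i1) (r - j1) m)"
    using cmM[OF cm, of m r 1 m] step rn by simp
  also have "\<dots> = (if r \<le> r then F 0 r 1 * F m (r - r) m else 0)
        + (if 1 \<le> m then F 1 0 1 * F (m - 1) r m else 0)"
    by (rule twoterm[OF cm rmin r1]) (use step rn in auto)
  also have "\<dots> = F 0 r 1 * F 1 0 1 ^ m + F 1 0 1 * (of_nat m * F 1 0 1 ^ (m - 1) * F 0 r 1)"
    using step valA[OF cm rmin r1, of m] by simp
  also have "\<dots> = of_nat (Suc m) * F 1 0 1 ^ m * F 0 r 1"
  proof -
    have "F 1 0 1 * F 1 0 1 ^ (m - 1) = F 1 0 1 ^ m"
      using step(1) by (cases m) auto
    then show ?thesis by (simp add: distrib_right)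
  qed
  finally show ?case using step by simp
qed

lemma alg_id: "(c::'k::field) * a ^ Suc N + a * (of_nat (Suc N) * a ^ N * c)
   = of_nat (Suc (Suc N)) * a ^ Suc N * c"
  by (simp add: algebra_simps)

lemma base_zero:
  fixes F :: "nat \<Rightarrow> nat \<Rightarrow> nat \<Rightarrow> 'k::field_char_0"
  assumes cm: "coalg_morph n F" and n2: "n \<ge> 2" and a: "F 1 0 1 \<noteq> 0"
  shows "\<forall>j<n. F 0 j 1 = 0"
proof (rule ccontr)
  assume "\<not> (\<forall>j<n. F 0 j 1 = 0)"
  then obtain j0 where j0: "j0 < n" "F 0 j0 1 \<noteq> 0" by auto
  define r where "r = (LEAST j. F 0 j 1 \<noteq> 0)"
  have c: "F 0 r 1 \<noteq> 0" unfolding r_def using j0(2) by (rule LeastI)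
  have rle: "r \<le> j0" unfolding r_def using j0 by (intro Least_le) 
  hence rn: "r < n" using j0 by simp
  have rmin: "\<And>j. j < r \<Longrightarrow> F 0 j 1 = 0" unfolding r_def using not_less_Least by blast
  have "F 0 0 1 = 0" using F00zero[OF cm n2] n2 by simp
  hence r1: "1 \<le> r" using c by (cases r) auto
  obtain N where nN: "n = Suc (Suc N)" using n2 by (metis add_2_eq_Suc le_Suc_ex)
  have e0: "(if 1 + Suc N < n then F (Suc N) r (1 + Suc N) else 0)
     = (\<Sum>i1\<le>Suc N. \<Sum>j1\<le>r. F i1 j1 1 * F (Suc N - i1) (r - j1) (Suc N))"
    using cmM[OF cm, of "Suc N" r 1 "Suc N"] nN rn by simp
  have e1: "(\<Sum>i1\<le>Suc N. \<Sum>j1\<le>r. F i1 j1 1 * F (Suc N - i1) (r - j1) (Suc N))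
     = (if r \<le> r then F 0 r 1 * F (Suc N) (r - r) (Suc N) else 0)
        + (if 1 \<le> Suc N then F 1 0 1 * F (Suc N - 1) r (Suc N) else 0)"
    by (rule twoterm[OF cm rmin r1]) (use nN rn in simp_all)
  have vA: "F (Suc N) 0 (Suc N) = F 1 0 1 ^ Suc N"
    using valA[OF cm rmin r1, of "Suc N"] nN by simp
  have vB: "F N r (Suc N) = of_nat (Suc N) * F 1 0 1 ^ N * F 0 r 1"
    using valB[OF cm rmin r1 rn, of "Suc N"] nN by simp
  have "0 = F 0 r 1 * F 1 0 1 ^ Suc N + F 1 0 1 * (of_nat (Suc N) * F 1 0 1 ^ N * F 0 r 1)"
    using e0 e1 vA vB nN by simp
  also have "\<dots> = of_nat (Suc (Suc N)) * F 1 0 1 ^ Suc N * F 0 r 1"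
    by (rule alg_id)
  finally have "of_nat (Suc (Suc N)) * F 1 0 1 ^ Suc N * F 0 r 1 = 0" by simp
  hence "(of_nat (Suc (Suc N)) :: 'k) = 0 \<or> F 1 0 1 ^ Suc N = 0 \<or> F 0 r 1 = 0" by simp
  thus False using a c by (simp only: of_nat_eq_0_iff power_eq_0_iff) simp
qed

lemma all_zero:
  fixes F :: "nat \<Rightarrow> nat \<Rightarrow> nat \<Rightarrow> 'k::field_char_0"
  assumes cm: "coalg_morph n F" and n2: "n \<ge> 2" and a: "F 1 0 1 \<noteq> 0"
    and k: "1 \<le> k" "k < n"
  shows "\<And>i j. i < k \<Longrightarrow> j < n \<Longrightarrow> F i j k = 0"
  using k
proof (induction k rule: dec_induct)
  case base
  fix i j :: nat assume "i < 1" "j < n"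
  then show "F i j 1 = 0" using base_zero[OF cm n2 a] by simp
next
  case (step k)
  fix i j :: nat assume ij: "i < Suc k" "j < n"
  have "(if 1 + k < n then F i j (1 + k) else 0)
     = (\<Sum>i1\<le>i. \<Sum>j1\<le>j. F i1 j1 1 * F (i - i1) (j - j1) k)"
    using cmM[OF cm, of i j 1 k] ij step n2 by simp
  also have "\<dots> = 0"
  proof (intro sum.neutral ballI)
    fix i1 j1 assume "i1 \<in> {..i}" "j1 \<in> {..j}"
    hence le: "i1 \<le> i" "j1 \<le> j" by auto
    show "F i1 j1 1 * F (i - i1) (j - j1) k = 0"
    proof (cases "i1 = 0")
      case True
      then show ?thesis using base_zero[OF cm n2 a] le ij by simp
    next
      case False
      hence "i - i1 < k" using ij le by simp
      then show ?thesis using step.IH[of "i - i1" "j - j1"] step ij le by simp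
    qed
  qed
  finally show "F i j (Suc k) = 0" using step by simp
qed

theorem proposition1p14:
  fixes n :: nat and P D :: "nat \<Rightarrow> nat \<Rightarrow> nat \<Rightarrow> 'k::field_char_0"
  assumes "alg_closed_field TYPE('k)"
    and "n \<ge> 2"
    and "regular_qmagma n P D"
    and "i < n" and "j < n" and "k < n" and "k > i"
  shows "P i j k = 0 \<and> D i j k = 0"
proof -
  obtain U V where cP: "coalg_morph n P" and cD: "coalg_morph n D"
    and cond: "\<forall>i<n. \<forall>j<n. \<forall>k<n.
          (\<Sum>j1\<le>j. \<Sum>m<n. U i j1 m * P m (j - j1) k)
             = (if j = 0 \<and> i = k then 1 else 0) \<and>
          (\<Sum>j1\<le>j. \<Sum>m<n. P i j1 m * U m (j - j1) k)
             = (if j = 0 \<and> i = k then 1 else 0) \<and>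
          (\<Sum>j1\<le>j. \<Sum>m<n. D i (j - j1) m * V m j1 k)
             = (if j = 0 \<and> i = k then 1 else 0) \<and>
          (\<Sum>j1\<le>j. \<Sum>m<n. V i (j - j1) m * D m j1 k)
             = (if j = 0 \<and> i = k then 1 else 0)"
    using assms(3) unfolding regular_qmagma_def by blast
  have "(\<Sum>m<n. P 1 0 m * U m 0 1) = 1" using cond[rule_format, of 1 0 1] assms(2) by simp
  hence aP: "P 1 0 1 \<noteq> 0" by (rule lin_nonzero[OF cP assms(2)])
  have "(\<Sum>m<n. D 1 0 m * V m 0 1) = 1" using cond[rule_format, of 1 0 1] assms(2) by simp
  hence aD: "D 1 0 1 \<noteq> 0" by (rule lin_nonzero[OF cD assms(2)])
  have k1: "1 \<le> k" using assms by simp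
  show ?thesis
    using all_zero[OF cP assms(2) aP k1 assms(6)] all_zero[OF cD assms(2) aD k1 assms(6)] assms
    by simp
qed

end
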